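(* Let $k$ be any field and $d$ a positive integer. Then $$S_{d+1}(x_1,\ldots,x_{d+1})\equiv S_d(x_1,\ldots,x_d)\,x_{d+1}\equiv x_{d+1}\,S_d(x_1,\ldots,x_d)\pmod{R_1^{(d)}},$$ i.e. the pairwise differences of these three elements lie in $R_1^{(d)}$.
   Context: $X=\{x_1,x_2,\ldots\}$ is a countably infinite set and $k_0\langle X\rangle$ is the free associative $k$-algebra (without identity) on $X$. A $T$-space is a $k$-linear subspace closed under every algebra endomorphism of $k_0\langle X\rangle$; the $T$-space generated by a subset is the smallest $T$-space containing it. $S_d(v_1,\ldots,v_d)=\sum_{\sigma\in\Sigma_d}\prod_{i=1}^d v_{\sigma(i)}$, and $R_1^{(d)}$ is the $T$-space generated by $S_d(x_1,\ldots,x_d)$. *)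

theory Defs
  imports "HOL-Combinatorics.Permutations"
begin

text \<open>The free associative k-algebra without identity on X = {x_0, x_1, ...}:
  finitely supported k-valued functions on words (lists of variable indices),
  with coefficient 0 on the empty word.\<close>

typedef (overloaded) 'k ncpoly =
  "{f :: nat list \<Rightarrow> 'k::zero. finite {w. f w \<noteq> 0} \<and> f [] = 0}"
  by (rule exI[of _ "\<lambda>_. 0"]) simp

definition coeff :: "'k::zero ncpoly \<Rightarrow> nat list \<Rightarrow> 'k" where
  "coeff p = Rep_ncpoly p"

definition nc_zero :: "'k::zero ncpoly" where
  "nc_zero = Abs_ncpoly (\<lambda>_. 0)"

definition nc_add :: "'k::field ncpoly \<Rightarrow> 'k ncpoly \<Rightarrow> 'k ncpoly" where
  "nc_add p q = Abs_ncpoly (\<lambda>w. coeff p w + coeff q w)"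

definition nc_diff :: "'k::field ncpoly \<Rightarrow> 'k ncpoly \<Rightarrow> 'k ncpoly" where
  "nc_diff p q = Abs_ncpoly (\<lambda>w. coeff p w - coeff q w)"

definition nc_smult :: "'k::field \<Rightarrow> 'k ncpoly \<Rightarrow> 'k ncpoly" where
  "nc_smult c p = Abs_ncpoly (\<lambda>w. c * coeff p w)"

definition nc_mult :: "'k::field ncpoly \<Rightarrow> 'k ncpoly \<Rightarrow> 'k ncpoly" where
  "nc_mult p q = Abs_ncpoly (\<lambda>w. \<Sum>i\<in>{0..length w}. coeff p (take i w) * coeff q (drop i w))"

definition var :: "nat \<Rightarrow> 'k::field ncpoly" where
  "var i = Abs_ncpoly (\<lambda>w. if w = [i] then 1 else 0)"

fun word_prod :: "(nat \<Rightarrow> 'k::field ncpoly) \<Rightarrow> nat list \<Rightarrow> 'k ncpoly" where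
  "word_prod v [] = nc_zero"
| "word_prod v [a] = v a"
| "word_prod v (a # b # w) = nc_mult (v a) (word_prod v (b # w))"

text \<open>The algebra endomorphism sending x_i to phi i, applied to p.\<close>
definition subst :: "(nat \<Rightarrow> 'k::field ncpoly) \<Rightarrow> 'k ncpoly \<Rightarrow> 'k ncpoly" where
  "subst \<phi> p = Abs_ncpoly (\<lambda>u. \<Sum>w\<in>{w. coeff p w \<noteq> 0}. coeff p w * coeff (word_prod \<phi> w) u)"

definition is_Tspace :: "'k::field ncpoly set \<Rightarrow> bool" where
  "is_Tspace V \<longleftrightarrow> nc_zero \<in> V
     \<and> (\<forall>p\<in>V. \<forall>q\<in>V. nc_add p q \<in> V)
     \<and> (\<forall>c. \<forall>p\<in>V. nc_smult c p \<in> V)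
     \<and> (\<forall>\<phi>. \<forall>p\<in>V. subst \<phi> p \<in> V)"

definition Tspace_gen :: "'k::field ncpoly set \<Rightarrow> 'k ncpoly set" where
  "Tspace_gen S = \<Inter>{V. is_Tspace V \<and> S \<subseteq> V}"

definition Sym :: "nat \<Rightarrow> (nat \<Rightarrow> 'k::field ncpoly) \<Rightarrow> 'k ncpoly" where
  "Sym d v = Abs_ncpoly (\<lambda>u. \<Sum>\<sigma>\<in>{\<sigma>. \<sigma> permutes {1..d}}.
                              coeff (word_prod v (map \<sigma> [1..<d+1])) u)"

definition R1 :: "nat \<Rightarrow> 'k::field ncpoly set" where
  "R1 d = Tspace_gen {Sym d var}"

end

theory Submission
  imports Defs
begin


lemma coeff_mem: "finite {w. coeff p w \<noteq> 0} \<and> coeff p [] = 0"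
  unfolding coeff_def using Rep_ncpoly[of p] by simp

lemma coeff_Abs: "finite {w. f w \<noteq> 0} \<Longrightarrow> f [] = 0 \<Longrightarrow> coeff (Abs_ncpoly f) = f"
  unfolding coeff_def by (simp add: Abs_ncpoly_inverse)

lemma coeff_inject: "coeff p = coeff q \<Longrightarrow> p = q"
  unfolding coeff_def by (simp add: Rep_ncpoly_inject)

lemma coeff_zero: "coeff nc_zero = (\<lambda>_. 0)"
  unfolding nc_zero_def by (rule coeff_Abs) auto

lemma coeff_add: "coeff (nc_add p q) = (\<lambda>w. coeff p w + coeff q w)"
  unfolding nc_add_def
proof (rule coeff_Abs)
  have "{w. coeff p w + coeff q w \<noteq> 0} \<subseteq> {w. coeff p w \<noteq> 0} \<union> {w. coeff q w \<noteq> 0}" by auto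
  then show "finite {w. coeff p w + coeff q w \<noteq> 0}"
    using coeff_mem[of p] coeff_mem[of q] finite_subset by blast
qed (simp add: coeff_mem)

lemma coeff_diff: "coeff (nc_diff p q) = (\<lambda>w. coeff p w - coeff q w)"
  unfolding nc_diff_def
proof (rule coeff_Abs)
  have "{w. coeff p w - coeff q w \<noteq> 0} \<subseteq> {w. coeff p w \<noteq> 0} \<union> {w. coeff q w \<noteq> 0}" by auto
  then show "finite {w. coeff p w - coeff q w \<noteq> 0}"
    using coeff_mem[of p] coeff_mem[of q] finite_subset by blast
qed (simp add: coeff_mem)

lemma coeff_smult: "coeff (nc_smult c p) = (\<lambda>w. c * coeff p w)"
  unfolding nc_smult_def
proof (rule coeff_Abs)
  have "{w. c * coeff p w \<noteq> 0} \<subseteq> {w. coeff p w \<noteq> 0}" by auto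
  then show "finite {w. c * coeff p w \<noteq> 0}"
    using coeff_mem[of p] finite_subset by blast
qed (simp add: coeff_mem)

lemma coeff_var: "coeff (var i) = (\<lambda>w. if w = [i] then 1 else 0)"
  unfolding var_def by (rule coeff_Abs) auto

lemma coeff_mult: "coeff (nc_mult p q) =
   (\<lambda>w. \<Sum>i\<in>{0..length w}. coeff p (take i w) * coeff q (drop i w))"
  unfolding nc_mult_def
proof (rule coeff_Abs)
  let ?F = "\<lambda>w. \<Sum>i\<in>{0..length w}. coeff p (take i w) * coeff q (drop i w)"
  have "{w. ?F w \<noteq> 0} \<subseteq> (\<lambda>(a,b). a @ b) ` ({w. coeff p w \<noteq> 0} \<times> {w. coeff q w \<noteq> 0})"
  proof
    fix w assume "w \<in> {w. ?F w \<noteq> 0}"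
    then obtain i where "coeff p (take i w) * coeff q (drop i w) \<noteq> 0"
      by (metis (mono_tags, lifting) mem_Collect_eq sum.neutral)
    then show "w \<in> (\<lambda>(a,b). a @ b) ` ({w. coeff p w \<noteq> 0} \<times> {w. coeff q w \<noteq> 0})"
      by (intro image_eqI[of _ _ "(take i w, drop i w)"]) auto
  qed
  then show "finite {w. ?F w \<noteq> 0}"
    using coeff_mem[of p] coeff_mem[of q] finite_subset by blast
qed (simp add: coeff_mem)

lemma fin_sum_supp:
  assumes "finite A" "\<And>x. x \<in> A \<Longrightarrow> finite {u. h x u \<noteq> 0}"
  shows "finite {u. (\<Sum>x\<in>A. h x u) \<noteq> (0::'a::comm_monoid_add)}"
proof -
  have "{u. (\<Sum>x\<in>A. h x u) \<noteq> 0} \<subseteq> (\<Union>x\<in>A. {u. h x u \<noteq> 0})"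
    by (auto intro: ccontr sum.neutral)
  then show ?thesis using assms finite_subset by blast
qed

lemma coeff_subst: "coeff (subst \<phi> p) =
  (\<lambda>u. \<Sum>w\<in>{w. coeff p w \<noteq> 0}. coeff p w * coeff (word_prod \<phi> w) u)"
  unfolding subst_def
proof (rule coeff_Abs)
  show "finite {u. (\<Sum>w\<in>{w. coeff p w \<noteq> 0}. coeff p w * coeff (word_prod \<phi> w) u) \<noteq> 0}"
  proof (rule fin_sum_supp)
    fix w
    have "{u. coeff p w * coeff (word_prod \<phi> w) u \<noteq> 0} \<subseteq> {u. coeff (word_prod \<phi> w) u \<noteq> 0}" by auto
    then show "finite {u. coeff p w * coeff (word_prod \<phi> w) u \<noteq> 0}"
      using coeff_mem finite_subset by blast
  qed (simp add: coeff_mem)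
qed (simp add: coeff_mem)

lemma coeff_Sym: "coeff (Sym d v) =
  (\<lambda>u. \<Sum>\<sigma>\<in>{\<sigma>. \<sigma> permutes {1..d}}. coeff (word_prod v (map \<sigma> [1..<d+1])) u)"
  unfolding Sym_def
proof (rule coeff_Abs)
  show "finite {u. (\<Sum>\<sigma>\<in>{\<sigma>. \<sigma> permutes {1..d}}. coeff (word_prod v (map \<sigma> [1..<d+1])) u) \<noteq> 0}"
    by (rule fin_sum_supp) (auto simp: coeff_mem finite_permutations)
qed (simp add: coeff_mem)



lemma mult_prefix:
  assumes "coeff p = (\<lambda>w. if w = a then 1 else 0)"
  shows "coeff (nc_mult p q) u = (if length a \<le> length u \<and> take (length a) u = a
           then coeff q (drop (length a) u) else 0)"
proof -
  have "coeff (nc_mult p q) u = (\<Sum>i\<in>{0..length u}. (if take i u = a then 1 else 0) * coeff q (drop i u))"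
    by (simp add: coeff_mult assms)
  also have "\<dots> = (\<Sum>i\<in>{0..length u}. if length a = i then
      (if take (length a) u = a then coeff q (drop (length a) u) else 0) else 0)"
  proof (rule sum.cong)
    fix i assume "i \<in> {0..length u}"
    then have "i \<le> length u" by simp
    have "take i u = a \<longleftrightarrow> length a = i \<and> take (length a) u = a"
    proof
      assume h: "take i u = a"
      have "length (take i u) = i" using \<open>i \<le> length u\<close> by simp
      then have "length a = i" using h by simp
      then show "length a = i \<and> take (length a) u = a" using h by simp
    next
      assume "length a = i \<and> take (length a) u = a"
      then show "take i u = a" by blast
    qed
    then show "(if take i u = a then 1 else 0) * coeff q (drop i u) = (if length a = i then
      (if take (length a) u = a then coeff q (drop (length a) u) else 0) else 0)"
      by (cases "length a = i") auto
  qed simp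
  also have "\<dots> = (if length a \<in> {0..length u} then
      (if take (length a) u = a then coeff q (drop (length a) u) else 0) else 0)"
    by (rule sum.delta'[OF finite_atLeastAtMost])
  also have "\<dots> = (if length a \<le> length u \<and> take (length a) u = a
           then coeff q (drop (length a) u) else 0)"
    by simp
  finally show ?thesis .
qed

lemma mult_suffix:
  assumes "coeff q = (\<lambda>w. if w = b then 1 else 0)"
  shows "coeff (nc_mult p q) u = (if length b \<le> length u \<and> drop (length u - length b) u = b
           then coeff p (take (length u - length b) u) else 0)"
proof -
  have "coeff (nc_mult p q) u = (\<Sum>i\<in>{0..length u}. coeff p (take i u) * (if drop i u = b then 1 else 0))"
    by (simp add: coeff_mult assms)
  also have "\<dots> = (\<Sum>i\<in>{0..length u}. if length u - length b = i then
      (if length b \<le> length u \<and> drop (length u - length b) u = b then coeff p (take (length u - length b) u) else 0) else 0)"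
  proof (rule sum.cong)
    fix i assume "i \<in> {0..length u}"
    then have iu: "i \<le> length u" by simp
    have "drop i u = b \<longleftrightarrow> length u - length b = i \<and> length b \<le> length u \<and> drop (length u - length b) u = b"
    proof
      assume h: "drop i u = b"
      have "length (drop i u) = length u - i" by simp
      then have "length b = length u - i" using h by simp
      then have "length u - length b = i \<and> length b \<le> length u" using iu by simp
      then show "length u - length b = i \<and> length b \<le> length u \<and> drop (length u - length b) u = b" using h by simp
    next
      assume "length u - length b = i \<and> length b \<le> length u \<and> drop (length u - length b) u = b"
      then show "drop i u = b" by blast
    qed
    then show "coeff p (take i u) * (if drop i u = b then 1 else 0) = (if length u - length b = i then
      (if length b \<le> length u \<and> drop (length u - length b) u = b then coeff p (take (length u - length b) u) else 0) else 0)"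
      by (cases "length u - length b = i") auto
  qed simp
  also have "\<dots> = (if length u - length b \<in> {0..length u} then
      (if length b \<le> length u \<and> drop (length u - length b) u = b then coeff p (take (length u - length b) u) else 0) else 0)"
    by (rule sum.delta'[OF finite_atLeastAtMost])
  also have "\<dots> = (if length b \<le> length u \<and> drop (length u - length b) u = b
           then coeff p (take (length u - length b) u) else 0)"
    by simp
  finally show ?thesis .
qed

lemma mult_single:
  assumes "coeff p = (\<lambda>w. if w = a then 1 else 0)" "coeff q = (\<lambda>w. if w = b then 1 else 0)"
  shows "coeff (nc_mult p q) = (\<lambda>w. if w = a @ b then 1 else 0)"
proof
  fix u
  show "coeff (nc_mult p q) u = (if u = a @ b then 1 else 0)"
    unfolding mult_prefix[OF assms(1)] assms(2)
    by (auto simp: append_eq_conv_conj) (metis append_take_drop_id)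
qed

lemma word_prod_single0:
  "(\<forall>a. coeff (\<phi> a) = (\<lambda>u. if u = g a then 1 else 0)) \<longrightarrow> w \<noteq> [] \<longrightarrow>
     coeff (word_prod \<phi> w) = (\<lambda>u. if u = concat (map g w) then 1 else 0)"
proof (induction \<phi> w rule: word_prod.induct)
  case (3 v a b w)
  show ?case
  proof (intro impI)
    assume h: "\<forall>a. coeff (v a) = (\<lambda>u. if u = g a then 1 else 0)"
    have "coeff (word_prod v (b#w)) = (\<lambda>u. if u = concat (map g (b#w)) then 1 else 0)"
      by (rule mp[OF mp[OF "3.IH" h]]) simp
    from mult_single[OF h[rule_format, of a] this]
    show "coeff (word_prod v (a#b#w)) = (\<lambda>u. if u = concat (map g (a#b#w)) then 1 else 0)"
      by simp
  qed
qed simp_all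

lemma word_prod_single:
  assumes "\<And>a. coeff (\<phi> a) = (\<lambda>u. if u = g a then 1 else 0)"
  shows "w \<noteq> [] \<Longrightarrow> coeff (word_prod \<phi> w) = (\<lambda>u. if u = concat (map g w) then 1 else 0)"
  using word_prod_single0[of \<phi> g w] assms by blast

lemma sum_ind_inj:
  assumes "finite A" "inj_on f A"
  shows "(\<Sum>x\<in>A. if u = f x then (1::'k::field) else 0) = (if u \<in> f ` A then 1 else 0)"
proof -
  have "(\<Sum>y\<in>f ` A. if u = y then (1::'k) else 0) = (\<Sum>x\<in>A. if u = f x then 1 else 0)"
    by (subst sum.reindex[OF assms(2)]) simp
  then show ?thesis using assms by simp
qed

definition P :: "nat \<Rightarrow> nat list set" where
  "P n = {w. distinct w \<and> set w = {1..n}}"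

lemma P_length: "w \<in> P n \<Longrightarrow> length w = n"
  unfolding P_def using distinct_card by fastforce

lemma word_prod_var: "w \<noteq> [] \<Longrightarrow> coeff (word_prod var w) = (\<lambda>u. if u = w then (1::'k::field) else 0)"
  using word_prod_single[of var "\<lambda>a. [a]" w] by (simp add: coeff_var)

lemma perm_image: "(\<lambda>\<sigma>. map \<sigma> [1..<d+1]) ` {\<sigma>. \<sigma> permutes {1..d}} = P d"
proof
  show "(\<lambda>\<sigma>. map \<sigma> [1..<d+1]) ` {\<sigma>. \<sigma> permutes {1..d}} \<subseteq> P d"
  proof
    fix w assume "w \<in> (\<lambda>\<sigma>. map \<sigma> [1..<d+1]) ` {\<sigma>. \<sigma> permutes {1..d}}"
    then obtain \<sigma> where s: "\<sigma> permutes {1..d}" and w: "w = map \<sigma> [1..<d+1]" by auto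
    have "inj_on \<sigma> {1..d}" using s permutes_inj_on by blast
    moreover have "set [1..<d+1] = {1..d}" by auto
    ultimately show "w \<in> P d" unfolding P_def w
      using permutes_image[OF s] by (auto simp: distinct_map)
  qed
  show "P d \<subseteq> (\<lambda>\<sigma>. map \<sigma> [1..<d+1]) ` {\<sigma>. \<sigma> permutes {1..d}}"
  proof
    fix w assume w: "w \<in> P d"
    have len: "length w = d" using P_length[OF w] .
    have dw: "distinct w" "set w = {1..d}" using w unfolding P_def by auto
    define \<sigma> where "\<sigma> i = (if i \<in> {1..d} then w!(i-1) else i)" for i
    have inj: "inj_on \<sigma> {1..d}"
    proof
      fix x y assume "x \<in> {1..d}" "y \<in> {1..d}" "\<sigma> x = \<sigma> y"
      then have "w!(x-1) = w!(y-1)" "x - 1 < length w" "y - 1 < length w" using len by (auto simp: \<sigma>_def)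
      then have "x - 1 = y - 1" using nth_eq_iff_index_eq[OF dw(1)] by blast
      then show "x = y" using \<open>x \<in> {1..d}\<close> \<open>y \<in> {1..d}\<close> by auto
    qed
    have img: "\<sigma> ` {1..d} = {1..d}"
    proof -
      have "\<sigma> ` {1..d} = set w"
      proof
        show "\<sigma> ` {1..d} \<subseteq> set w" using len by (auto simp: \<sigma>_def)
        show "set w \<subseteq> \<sigma> ` {1..d}"
        proof
          fix x assume "x \<in> set w"
          then obtain i where "i < length w" "w!i = x" by (auto simp: in_set_conv_nth)
          then show "x \<in> \<sigma> ` {1..d}" using len
            by (intro image_eqI[of _ _ "i+1"]) (auto simp: \<sigma>_def)
        qed
      qed
      then show ?thesis using dw by simp
    qed
    have "bij_betw \<sigma> {1..d} {1..d}" using inj img by (simp add: bij_betw_def)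
    moreover have "\<sigma> x = x" if "x \<notin> {1..d}" for x using that by (auto simp: \<sigma>_def)
    ultimately have "\<sigma> permutes {1..d}" by (rule bij_imp_permutes)
    moreover have "map \<sigma> [1..<d+1] = w"
      by (rule nth_equalityI) (auto simp: len \<sigma>_def simp del: upt_Suc)
    ultimately show "w \<in> (\<lambda>\<sigma>. map \<sigma> [1..<d+1]) ` {\<sigma>. \<sigma> permutes {1..d}}" by force
  qed
qed

lemma perm_inj: "inj_on (\<lambda>\<sigma>. map \<sigma> [1..<d+1]) {\<sigma>. \<sigma> permutes {1..d}}"
proof
  fix \<sigma> \<tau> assume s: "\<sigma> \<in> {\<sigma>. \<sigma> permutes {1..d}}" "\<tau> \<in> {\<sigma>. \<sigma> permutes {1..d}}"
    and e: "map \<sigma> [1..<d+1] = map \<tau> [1..<d+1]"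
  show "\<sigma> = \<tau>"
  proof
    fix i show "\<sigma> i = \<tau> i"
    proof (cases "i \<in> {1..d}")
      case True
      then have iin: "i \<in> set [1..<d+1]" by auto
      have all: "\<forall>x\<in>set [1..<d+1]. \<sigma> x = \<tau> x" by (rule iffD1[OF map_eq_conv e])
      show ?thesis by (rule bspec[OF all iin])
    next
      case False
      have s1: "\<sigma> permutes {1..d}" "\<tau> permutes {1..d}" using s by auto
      show ?thesis using permutes_not_in[OF s1(1) False] permutes_not_in[OF s1(2) False] by simp
    qed
  qed
qed

lemma coeff_Sym_var:
  assumes "d \<ge> 1"
  shows "coeff (Sym d var) = (\<lambda>u. if u \<in> P d then (1::'k::field) else 0)"
proof
  fix u
  have "coeff (Sym d var) u = (\<Sum>\<sigma>\<in>{\<sigma>. \<sigma> permutes {1..d}}. if u = map \<sigma> [1..<d+1] then (1::'k) else 0)"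
  proof -
    have eq: "coeff (word_prod var (map \<sigma> [1..<d+1])) u = (if u = map \<sigma> [1..<d+1] then (1::'k) else 0)" for \<sigma>
    proof -
      have "length (map \<sigma> [1..<d+1]) = d" by simp
      then have ne: "map \<sigma> [1..<d+1] \<noteq> []" using assms by (metis length_0_conv not_one_le_zero)
      show ?thesis by (simp only: word_prod_var[OF ne])
    qed
    show ?thesis unfolding coeff_Sym eq by (rule refl)
  qed
  also have "\<dots> = (if u \<in> P d then 1 else 0)"
    using sum_ind_inj[OF finite_permutations[OF finite_atLeastAtMost] perm_inj, of u d]
    unfolding perm_image .
  finally show "coeff (Sym d var) u = (if u \<in> P d then (1::'k) else 0)" .
qed



definition ins1 :: "nat \<Rightarrow> nat \<Rightarrow> nat list \<Rightarrow> nat list" where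
  "ins1 d j w = concat (map (\<lambda>a. if a = j then [d+1, j] else [a]) w)"

definition ins2 :: "nat \<Rightarrow> nat \<Rightarrow> nat list \<Rightarrow> nat list" where
  "ins2 d j w = concat (map (\<lambda>a. if a = j then [j, d+1] else [a]) w)"

lemma concat_map_id: "j \<notin> set xs \<Longrightarrow> concat (map (\<lambda>a. if a = j then X else [a]) xs) = xs"
  by (induction xs) auto

lemma P_finite: "finite (P d)"
proof -
  have "P d \<subseteq> {xs. set xs \<subseteq> {1..d} \<and> length xs = d}" using P_length unfolding P_def by auto
  then show ?thesis using finite_lists_length_eq[of "{1..d}" d] finite_subset by blast
qed

lemma P_nonempty_word: "d \<ge> 1 \<Longrightarrow> w \<in> P d \<Longrightarrow> w \<noteq> []"
  using P_length by fastforce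

lemma decomp:
  assumes "w \<in> P d" "j \<in> {1..d}"
  shows "\<exists>xs ys. w = xs @ j # ys \<and> j \<notin> set xs \<and> j \<notin> set ys"
proof -
  have "j \<in> set w" "distinct w" using assms unfolding P_def by auto
  then obtain xs ys where "w = xs @ j # ys" using split_list by metis
  then show ?thesis using \<open>distinct w\<close> by auto
qed

lemma ins1_dec: "j \<notin> set xs \<Longrightarrow> j \<notin> set ys \<Longrightarrow> ins1 d j (xs @ j # ys) = xs @ (d+1) # j # ys"
  unfolding ins1_def by (simp add: concat_map_id)

lemma ins2_dec: "j \<notin> set xs \<Longrightarrow> j \<notin> set ys \<Longrightarrow> ins2 d j (xs @ j # ys) = xs @ j # (d+1) # ys"
  unfolding ins2_def by (simp add: concat_map_id)

lemma notin_P: "w \<in> P d \<Longrightarrow> d + 1 \<notin> set w"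
  unfolding P_def by auto

lemma inj1: "inj_on (\<lambda>(j,w). ins1 d j w) ({1..d} \<times> P d)"
proof (rule inj_on_inverseI[where g = "\<lambda>u. (hd (tl (dropWhile (\<lambda>a. a \<noteq> d+1) u)), removeAll (d+1) u)"])
  fix x assume "x \<in> {1..d} \<times> P d"
  then obtain j w where x: "x = (j,w)" and j: "j \<in> {1..d}" and w: "w \<in> P d" by auto
  obtain xs ys where e: "w = xs @ j # ys" "j \<notin> set xs" "j \<notin> set ys" using decomp[OF w j] by blast
  have n: "d+1 \<notin> set xs" "d+1 \<notin> set ys" "j \<noteq> d+1" using notin_P[OF w] e by auto
  have "dropWhile (\<lambda>a. a \<noteq> d+1) (xs @ (d+1) # j # ys) = (d+1) # j # ys"
    using n by (subst dropWhile_append2) auto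
  moreover have "removeAll (d+1) (xs @ (d+1) # j # ys) = xs @ j # ys"
    using n by simp
  ultimately show "(\<lambda>u. (hd (tl (dropWhile (\<lambda>a. a \<noteq> d+1) u)), removeAll (d+1) u)) ((\<lambda>(j,w). ins1 d j w) x) = x"
    using x e ins1_dec[OF e(2,3)] by simp
qed

lemma inj2: "inj_on (\<lambda>(j,w). ins2 d j w) ({1..d} \<times> P d)"
proof (rule inj_on_inverseI[where g = "\<lambda>u. (last (takeWhile (\<lambda>a. a \<noteq> d+1) u), removeAll (d+1) u)"])
  fix x assume "x \<in> {1..d} \<times> P d"
  then obtain j w where x: "x = (j,w)" and j: "j \<in> {1..d}" and w: "w \<in> P d" by auto
  obtain xs ys where e: "w = xs @ j # ys" "j \<notin> set xs" "j \<notin> set ys" using decomp[OF w j] by blast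
  have n: "d+1 \<notin> set xs" "d+1 \<notin> set ys" "j \<noteq> d+1" using notin_P[OF w] e by auto
  have "takeWhile (\<lambda>a. a \<noteq> d+1) ((xs @ [j]) @ (d+1) # ys) = xs @ [j]"
    using n by (subst takeWhile_append2) auto
  moreover have "removeAll (d+1) (xs @ j # (d+1) # ys) = xs @ j # ys"
    using n by simp
  ultimately show "(\<lambda>u. (last (takeWhile (\<lambda>a. a \<noteq> d+1) u), removeAll (d+1) u)) ((\<lambda>(j,w). ins2 d j w) x) = x"
    using x e ins2_dec[OF e(2,3)] by simp
qed

lemma iv: "{1..d+1} - {d+1} = {(1::nat)..d}" by auto

lemma img1: "(\<lambda>(j,w). ins1 d j w) ` ({1..d} \<times> P d) = {u \<in> P (d+1). \<not> (\<exists>v. u = v @ [d+1])}"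
proof
  show "(\<lambda>(j,w). ins1 d j w) ` ({1..d} \<times> P d) \<subseteq> {u \<in> P (d+1). \<not> (\<exists>v. u = v @ [d+1])}"
  proof
    fix u assume "u \<in> (\<lambda>(j,w). ins1 d j w) ` ({1..d} \<times> P d)"
    then obtain j w where u: "u = ins1 d j w" and j: "j \<in> {1..d}" and w: "w \<in> P d" by auto
    obtain xs ys where e: "w = xs @ j # ys" "j \<notin> set xs" "j \<notin> set ys" using decomp[OF w j] by blast
    have n: "d+1 \<notin> set w" using notin_P[OF w] .
    have u2: "u = xs @ (d+1) # j # ys" using u e ins1_dec by simp
    have "distinct w" "set w = {1..d}" using w unfolding P_def by auto
    then have "distinct u" "set u = {1..d+1}" using u2 e n j by auto
    then have "u \<in> P (d+1)" unfolding P_def by simp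
    moreover have "\<not> (\<exists>v. u = v @ [d+1])"
    proof
      assume "\<exists>v. u = v @ [d+1]"
      then have "last u = d+1" by auto
      moreover have "last u = last (j # ys)" using u2 by simp
      moreover have "last (j # ys) \<in> set w" using e by simp
      ultimately show False using n by simp
    qed
    ultimately show "u \<in> {u \<in> P (d+1). \<not> (\<exists>v. u = v @ [d+1])}" by simp
  qed
  show "{u \<in> P (d+1). \<not> (\<exists>v. u = v @ [d+1])} \<subseteq> (\<lambda>(j,w). ins1 d j w) ` ({1..d} \<times> P d)"
  proof
    fix u assume "u \<in> {u \<in> P (d+1). \<not> (\<exists>v. u = v @ [d+1])}"
    then have u: "distinct u" "set u = {1..d+1}" and ne: "\<not> (\<exists>v. u = v @ [d+1])" unfolding P_def by auto
    then have "d+1 \<in> set u" by simp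
    then obtain xs zs where uz: "u = xs @ (d+1) # zs" using split_list by metis
    then have "zs \<noteq> []" using ne by auto
    then obtain j ys where zs: "zs = j # ys" by (cases zs) auto
    define w where "w = xs @ j # ys"
    have d1: "d+1 \<notin> set xs" "d+1 \<notin> set ys" "j \<noteq> d+1" "j \<notin> set xs" "j \<notin> set ys" "distinct w"
      using u(1) uz zs unfolding w_def by auto
    have su: "set u = insert (d+1) (set w)" using uz zs unfolding w_def by auto
    have nw: "d+1 \<notin> set w" using d1(1-3) unfolding w_def by simp
    have "set w = set u - {d+1}" unfolding su using nw by (rule Diff_insert_absorb[symmetric])
    then have sw: "set w = {1..d}" using u(2) iv by (simp only:)
    then have wP: "w \<in> P d" using d1 unfolding P_def by simp
    have "j \<in> set w" unfolding w_def by simp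
    then have "j \<in> {1..d}" using sw by simp
    moreover have "ins1 d j w = u" unfolding w_def using ins1_dec[OF d1(4,5)] uz zs by simp
    ultimately show "u \<in> (\<lambda>(j,w). ins1 d j w) ` ({1..d} \<times> P d)"
      using wP by (intro image_eqI[of _ _ "(j,w)"]) auto
  qed
qed

lemma img2: "(\<lambda>(j,w). ins2 d j w) ` ({1..d} \<times> P d) = {u \<in> P (d+1). \<not> (\<exists>v. u = (d+1) # v)}"
proof
  show "(\<lambda>(j,w). ins2 d j w) ` ({1..d} \<times> P d) \<subseteq> {u \<in> P (d+1). \<not> (\<exists>v. u = (d+1) # v)}"
  proof
    fix u assume "u \<in> (\<lambda>(j,w). ins2 d j w) ` ({1..d} \<times> P d)"
    then obtain j w where u: "u = ins2 d j w" and j: "j \<in> {1..d}" and w: "w \<in> P d" by auto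
    obtain xs ys where e: "w = xs @ j # ys" "j \<notin> set xs" "j \<notin> set ys" using decomp[OF w j] by blast
    have n: "d+1 \<notin> set w" using notin_P[OF w] .
    have u2: "u = xs @ j # (d+1) # ys" using u e ins2_dec by simp
    have "distinct w" "set w = {1..d}" using w unfolding P_def by auto
    then have "distinct u" "set u = {1..d+1}" using u2 e n j by auto
    then have "u \<in> P (d+1)" unfolding P_def by simp
    moreover have "\<not> (\<exists>v. u = (d+1) # v)"
    proof
      assume "\<exists>v. u = (d+1) # v"
      then have "hd u = d+1" by auto
      moreover have "hd u = hd (xs @ [j])" using u2 by (cases xs) auto
      moreover have "hd (xs @ [j]) \<in> set w" using e by (cases xs) auto
      ultimately show False using n by simp
    qed
    ultimately show "u \<in> {u \<in> P (d+1). \<not> (\<exists>v. u = (d+1) # v)}" by simp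
  qed
  show "{u \<in> P (d+1). \<not> (\<exists>v. u = (d+1) # v)} \<subseteq> (\<lambda>(j,w). ins2 d j w) ` ({1..d} \<times> P d)"
  proof
    fix u assume "u \<in> {u \<in> P (d+1). \<not> (\<exists>v. u = (d+1) # v)}"
    then have u: "distinct u" "set u = {1..d+1}" and ne: "\<not> (\<exists>v. u = (d+1) # v)" unfolding P_def by auto
    then have "d+1 \<in> set u" by simp
    then obtain xs0 ys where uz: "u = xs0 @ (d+1) # ys" using split_list by metis
    then have "xs0 \<noteq> []" using ne by auto
    then obtain xs j where zs: "xs0 = xs @ [j]" by (cases xs0 rule: rev_cases) auto
    define w where "w = xs @ j # ys"
    have d1: "d+1 \<notin> set xs" "d+1 \<notin> set ys" "j \<noteq> d+1" "j \<notin> set xs" "j \<notin> set ys" "distinct w"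
      using u(1) uz zs unfolding w_def by auto
    have su: "set u = insert (d+1) (set w)" using uz zs unfolding w_def by auto
    have nw: "d+1 \<notin> set w" using d1(1-3) unfolding w_def by simp
    have "set w = set u - {d+1}" unfolding su using nw by (rule Diff_insert_absorb[symmetric])
    then have sw: "set w = {1..d}" using u(2) iv by (simp only:)
    then have wP: "w \<in> P d" using d1 unfolding P_def by simp
    have "j \<in> set w" unfolding w_def by simp
    then have "j \<in> {1..d}" using sw by simp
    moreover have "ins2 d j w = u" unfolding w_def using ins2_dec[OF d1(4,5)] uz zs by simp
    ultimately show "u \<in> (\<lambda>(j,w). ins2 d j w) ` ({1..d} \<times> P d)"
      using wP by (intro image_eqI[of _ _ "(j,w)"]) auto
  qed
qed



lemma R1_gen: "Sym d var \<in> R1 d"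
  unfolding R1_def Tspace_gen_def by auto

lemma R1_subst: "p \<in> R1 d \<Longrightarrow> subst \<phi> p \<in> R1 d"
  unfolding R1_def Tspace_gen_def is_Tspace_def by auto

lemma R1_add: "p \<in> R1 d \<Longrightarrow> q \<in> R1 d \<Longrightarrow> nc_add p q \<in> R1 d"
  unfolding R1_def Tspace_gen_def is_Tspace_def by auto

lemma R1_smult: "p \<in> R1 d \<Longrightarrow> nc_smult c p \<in> R1 d"
  unfolding R1_def Tspace_gen_def is_Tspace_def by auto

lemma R1_zero: "nc_zero \<in> R1 d"
  unfolding R1_def Tspace_gen_def is_Tspace_def by auto

lemma R1_diff: "p \<in> R1 d \<Longrightarrow> q \<in> R1 d \<Longrightarrow> nc_diff p q \<in> R1 d"
proof -
  assume "p \<in> R1 d" "q \<in> R1 d"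
  then have "nc_add p (nc_smult (-1) q) \<in> R1 d" by (intro R1_add R1_smult)
  moreover have "nc_add p (nc_smult (-1) q) = nc_diff p q"
    by (rule coeff_inject) (simp add: coeff_add coeff_smult coeff_diff)
  ultimately show ?thesis by simp
qed

fun sumF :: "(nat \<Rightarrow> 'k::field ncpoly) \<Rightarrow> nat \<Rightarrow> 'k ncpoly" where
  "sumF F 0 = nc_zero"
| "sumF F (Suc n) = nc_add (F (Suc n)) (sumF F n)"

lemma coeff_sumF: "coeff (sumF F n) u = (\<Sum>j\<in>{1..n}. coeff (F j) u)"
  by (induction n) (simp_all add: coeff_zero coeff_add atLeastAtMostSuc_conv add.commute)

lemma R1_sumF: "(\<And>j. F j \<in> R1 d) \<Longrightarrow> sumF F n \<in> R1 d"
  by (induction n) (simp_all add: R1_zero R1_add)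

lemma coeff_subst_Sym:
  assumes d: "d \<ge> 1"
    and w1: "\<And>w. w \<in> P d \<Longrightarrow> coeff (word_prod \<phi> w) = (\<lambda>u. if u = f w then (1::'k::field) else 0)"
  shows "coeff (subst \<phi> (Sym d var :: 'k ncpoly)) u = (\<Sum>w\<in>P d. if u = f w then 1 else 0)"
proof -
  have cS: "coeff (Sym d var :: 'k ncpoly) = (\<lambda>u. if u \<in> P d then 1 else 0)"
    by (rule coeff_Sym_var[OF d])
  have S: "{w. coeff (Sym d var :: 'k ncpoly) w \<noteq> 0} = P d" using cS by simp
  show ?thesis unfolding coeff_subst S
    by (rule sum.cong) (simp_all add: cS w1)
qed

definition phi1 :: "nat \<Rightarrow> nat \<Rightarrow> nat \<Rightarrow> 'k::field ncpoly" where
  "phi1 d j = var(j := nc_mult (var (d+1)) (var j))"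

definition phi2 :: "nat \<Rightarrow> nat \<Rightarrow> nat \<Rightarrow> 'k::field ncpoly" where
  "phi2 d j = var(j := nc_mult (var j) (var (d+1)))"

lemma coeff_phi1: "coeff (phi1 d j a :: 'k::field ncpoly) = (\<lambda>u. if u = (if a = j then [d+1, j] else [a]) then 1 else 0)"
proof -
  have m: "coeff (nc_mult (var (d+1)) (var j) :: 'k ncpoly) = (\<lambda>u. if u = [d+1] @ [j] then 1 else 0)"
    by (rule mult_single) (rule coeff_var)+
  show ?thesis unfolding phi1_def using m by (auto simp: coeff_var)
qed

lemma coeff_phi2: "coeff (phi2 d j a :: 'k::field ncpoly) = (\<lambda>u. if u = (if a = j then [j, d+1] else [a]) then 1 else 0)"
proof -
  have m: "coeff (nc_mult (var j) (var (d+1)) :: 'k ncpoly) = (\<lambda>u. if u = [j] @ [d+1] then 1 else 0)"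
    by (rule mult_single) (rule coeff_var)+
  show ?thesis unfolding phi2_def using m by (auto simp: coeff_var)
qed

lemma sum_double_ind:
  assumes "inj_on (\<lambda>(j,w). f j w) ({1..d} \<times> P d)"
  shows "(\<Sum>j\<in>{1..d}. \<Sum>w\<in>P d. if u = f j w then (1::'k::field) else 0)
     = (if u \<in> (\<lambda>(j,w). f j w) ` ({1..d} \<times> P d) then 1 else 0)"
proof -
  have "(\<Sum>j\<in>{1..d}. \<Sum>w\<in>P d. if u = f j w then (1::'k) else 0)
      = (\<Sum>x\<in>{1..d} \<times> P d. if u = (\<lambda>(j,w). f j w) x then 1 else 0)"
    by (subst sum.cartesian_product) (simp add: case_prod_beta)
  also have "\<dots> = (if u \<in> (\<lambda>(j,w). f j w) ` ({1..d} \<times> P d) then 1 else 0)"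
    by (rule sum_ind_inj[OF _ assms]) (simp add: P_finite)
  finally show ?thesis .
qed

lemma coeff_B:
  "coeff (nc_mult (Sym d var) (var (d+1)) :: 'k::field ncpoly) u
     = (if u \<in> P (d+1) \<and> (\<exists>v. u = v @ [d+1]) then 1 else 0)" if "d \<ge> 1"
proof -
  have c: "coeff (nc_mult (Sym d var) (var (d+1)) :: 'k ncpoly) u =
    (if length [d+1] \<le> length u \<and> drop (length u - length [d+1]) u = [d+1]
      then (if take (length u - length [d+1]) u \<in> P d then 1 else 0) else 0)"
  proof -
    have cS: "coeff (Sym d var :: 'k ncpoly) = (\<lambda>u. if u \<in> P d then 1 else 0)"
      by (rule coeff_Sym_var[OF that])
    have "coeff (nc_mult (Sym d var) (var (d+1)) :: 'k ncpoly) u =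
      (if length [d+1] \<le> length u \<and> drop (length u - length [d+1]) u = [d+1]
        then coeff (Sym d var :: 'k ncpoly) (take (length u - length [d+1]) u) else 0)"
      by (rule mult_suffix) (rule coeff_var)
    then show ?thesis by (simp only: cS)
  qed
  have iff: "(length [d+1] \<le> length u \<and> drop (length u - length [d+1]) u = [d+1]) \<longleftrightarrow> (\<exists>v. u = v @ [d+1])"
  proof
    assume h: "length [d+1] \<le> length u \<and> drop (length u - length [d+1]) u = [d+1]"
    show "\<exists>v. u = v @ [d+1]"
      using append_take_drop_id[of "length u - length [d+1]" u] h by metis
  qed auto
  show ?thesis
  proof (cases "\<exists>v. u = v @ [d+1]")
    case True
    then obtain v where v: "u = v @ [d+1]" by blast
    have t: "take (length u - length [d+1]) u = v" using v by simp
    have "v \<in> P d \<longleftrightarrow> u \<in> P (d+1)"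
    proof
      assume "v \<in> P d" then show "u \<in> P (d+1)" using v notin_P[of v d] unfolding P_def by auto
    next
      assume "u \<in> P (d+1)"
      then have "distinct u" "set u = {1..d+1}" unfolding P_def by auto
      then have "distinct v" "set v = {1..d+1} - {d+1}" using v by auto
      moreover have "{1..d+1} - {d+1} = {1..d}" by auto
      ultimately show "v \<in> P d" unfolding P_def by simp
    qed
    then show ?thesis using c iff True t by simp
  next
    case False
    then show ?thesis using c iff by simp
  qed
qed

lemma coeff_C:
  "coeff (nc_mult (var (d+1)) (Sym d var) :: 'k::field ncpoly) u
     = (if u \<in> P (d+1) \<and> (\<exists>v. u = (d+1) # v) then 1 else 0)" if "d \<ge> 1"
proof -
  have c: "coeff (nc_mult (var (d+1)) (Sym d var) :: 'k ncpoly) u =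
    (if length [d+1] \<le> length u \<and> take (length [d+1]) u = [d+1]
      then (if drop (length [d+1]) u \<in> P d then 1 else 0) else 0)"
  proof -
    have cS: "coeff (Sym d var :: 'k ncpoly) = (\<lambda>u. if u \<in> P d then 1 else 0)"
      by (rule coeff_Sym_var[OF that])
    have "coeff (nc_mult (var (d+1)) (Sym d var) :: 'k ncpoly) u =
      (if length [d+1] \<le> length u \<and> take (length [d+1]) u = [d+1]
        then coeff (Sym d var :: 'k ncpoly) (drop (length [d+1]) u) else 0)"
      by (rule mult_prefix) (rule coeff_var)
    then show ?thesis by (simp only: cS)
  qed
  have iff: "(length [d+1] \<le> length u \<and> take (length [d+1]) u = [d+1]) \<longleftrightarrow> (\<exists>v. u = (d+1) # v)"
    by (cases u) auto
  show ?thesis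
  proof (cases "\<exists>v. u = (d+1) # v")
    case True
    then obtain v where v: "u = (d+1) # v" by blast
    have t: "drop (length [d+1]) u = v" using v by simp
    have "v \<in> P d \<longleftrightarrow> u \<in> P (d+1)"
    proof
      assume "v \<in> P d" then show "u \<in> P (d+1)" using v notin_P[of v d] unfolding P_def by auto
    next
      assume "u \<in> P (d+1)"
      then have "distinct u" "set u = {1..d+1}" unfolding P_def by auto
      then have "distinct v" "set v = {1..d+1} - {d+1}" using v by auto
      moreover have "{1..d+1} - {d+1} = {1..d}" by auto
      ultimately show "v \<in> P d" unfolding P_def by simp
    qed
    then show ?thesis using c iff True t by simp
  next
    case False
    then show ?thesis using c iff by simp
  qed
qed



theorem corollary2p2:
  fixes d :: nat
  assumes "d \<ge> 1"
  shows "nc_diff (Sym (d+1) var) (nc_mult (Sym d var) (var (d+1))) \<in> (R1 d :: 'k::field ncpoly set)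
       \<and> nc_diff (nc_mult (Sym d var) (var (d+1))) (nc_mult (var (d+1)) (Sym d var)) \<in> (R1 d :: 'k ncpoly set)
       \<and> nc_diff (Sym (d+1) var) (nc_mult (var (d+1)) (Sym d var)) \<in> (R1 d :: 'k ncpoly set)"
proof -
  have cA: "coeff (Sym (d+1) var :: 'k ncpoly) = (\<lambda>u. if u \<in> P (d+1) then 1 else 0)"
    by (rule coeff_Sym_var) simp
  define E1 :: "'k ncpoly" where "E1 = sumF (\<lambda>j. subst (phi1 d j) (Sym d var)) d"
  define E2 :: "'k ncpoly" where "E2 = sumF (\<lambda>j. subst (phi2 d j) (Sym d var)) d"
  have E1R: "E1 \<in> R1 d" unfolding E1_def by (intro R1_sumF R1_subst R1_gen)
  have E2R: "E2 \<in> R1 d" unfolding E2_def by (intro R1_sumF R1_subst R1_gen)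
  have w1: "coeff (word_prod (phi1 d j) w :: 'k ncpoly) = (\<lambda>u. if u = ins1 d j w then 1 else 0)"
    if "w \<in> P d" for j w
    unfolding ins1_def
    by (rule word_prod_single[OF coeff_phi1 P_nonempty_word[OF assms that]])
  have w2: "coeff (word_prod (phi2 d j) w :: 'k ncpoly) = (\<lambda>u. if u = ins2 d j w then 1 else 0)"
    if "w \<in> P d" for j w
    unfolding ins2_def
    by (rule word_prod_single[OF coeff_phi2 P_nonempty_word[OF assms that]])
  have cE1: "coeff E1 u = (if u \<in> {u \<in> P (d+1). \<not> (\<exists>v. u = v @ [d+1])} then 1 else 0)" for u
  proof -
    have "coeff E1 u = (\<Sum>j\<in>{1..d}. coeff (subst (phi1 d j) (Sym d var) :: 'k ncpoly) u)"
      unfolding E1_def by (rule coeff_sumF)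
    also have "\<dots> = (\<Sum>j\<in>{1..d}. \<Sum>w\<in>P d. if u = ins1 d j w then (1::'k) else 0)"
      by (rule sum.cong[OF refl], rule coeff_subst_Sym[OF assms w1])
    also have "\<dots> = (if u \<in> (\<lambda>(j,w). ins1 d j w) ` ({1..d} \<times> P d) then 1 else 0)"
      by (rule sum_double_ind[OF inj1])
    finally show ?thesis unfolding img1 .
  qed
  have cE2: "coeff E2 u = (if u \<in> {u \<in> P (d+1). \<not> (\<exists>v. u = (d+1) # v)} then 1 else 0)" for u
  proof -
    have "coeff E2 u = (\<Sum>j\<in>{1..d}. coeff (subst (phi2 d j) (Sym d var) :: 'k ncpoly) u)"
      unfolding E2_def by (rule coeff_sumF)
    also have "\<dots> = (\<Sum>j\<in>{1..d}. \<Sum>w\<in>P d. if u = ins2 d j w then (1::'k) else 0)"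
      by (rule sum.cong[OF refl], rule coeff_subst_Sym[OF assms w2])
    also have "\<dots> = (if u \<in> (\<lambda>(j,w). ins2 d j w) ` ({1..d} \<times> P d) then 1 else 0)"
      by (rule sum_double_ind[OF inj2])
    finally show ?thesis unfolding img2 .
  qed
  have eq1: "nc_diff (Sym (d+1) var) (nc_mult (Sym d var) (var (d+1))) = E1"
  proof (rule coeff_inject, rule ext)
    fix u
    show "coeff (nc_diff (Sym (d+1) var) (nc_mult (Sym d var) (var (d+1)))) u = coeff E1 u"
      unfolding coeff_diff cE1 cA coeff_B[OF assms] by auto
  qed
  have eq2: "nc_diff (Sym (d+1) var) (nc_mult (var (d+1)) (Sym d var)) = E2"
  proof (rule coeff_inject, rule ext)
    fix u
    show "coeff (nc_diff (Sym (d+1) var) (nc_mult (var (d+1)) (Sym d var))) u = coeff E2 u"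
      unfolding coeff_diff cE2 cA coeff_C[OF assms] by auto
  qed
  have eq3: "nc_diff (nc_mult (Sym d var) (var (d+1))) (nc_mult (var (d+1)) (Sym d var))
       = nc_diff (nc_diff (Sym (d+1) var) (nc_mult (var (d+1)) (Sym d var)))
                 (nc_diff (Sym (d+1) var) (nc_mult (Sym d var) (var (d+1))) :: 'k ncpoly)"
    by (rule coeff_inject) (simp add: coeff_diff)
  show ?thesis
    using E1R E2R R1_diff[OF E2R E1R] unfolding eq3 eq1 eq2 by simp
qed


end
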